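(* For the system $$\dot x=-y+x(x^3+xy^2)+\sum_{k=1}^2\varepsilon^k\Big(\lambda_kx+\sum_{i+j=4}a_{k,i,j}x^iy^j\Big),\qquad \dot y=x+y(x^3+xy^2)+\sum_{k=1}^2\varepsilon^k\Big(\lambda_ky+\sum_{i+j=4}b_{k,i,j}x^iy^j\Big)$$ with real coefficients, the first order averaged function satisfies $f_1(z)\equiv0$ on $D=(0,3^{-1/3})$ if and only if $a_{1,1,3}=b_{1,0,4}$, $a_{1,3,1}=b_{1,2,2}$, and $b_{1,4,0}=\lambda_1=0$.
   Context: Averaging framework (first order): in polar coordinates $x=r\cos\theta,y=r\sin\theta$, write $dr/d\theta=F_0(\theta,r)+\varepsilon F_1(\theta,r)+O(\varepsilon^2)$. Here $F_0=r^4\cos\theta$, its solution with $r(0)=z$ is $r(\theta,z)=z(1-3z^3\sin\theta)^{-1/3}$, $2\pi$-periodic and positive for $z\in D=(0,3^{-1/3})$, and $Y(\theta,z)=(1-3z^3\sin\theta)^{-4/3}$ solves $Y'=\partial_rF_0(\theta,r(\theta,z))Y$, $Y(0,z)=1$. The first order averaged function is $f_1(z)=Y(2\pi,z)\int_0^{2\pi}Y(s,z)^{-1}F_1(s,r(s,z))\,ds$. *)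

theory Defs
  imports "HOL-Analysis.Analysis"
begin

definition Ppert :: "(nat \<Rightarrow> real) \<Rightarrow> (nat \<Rightarrow> nat \<Rightarrow> nat \<Rightarrow> real) \<Rightarrow> nat \<Rightarrow> real \<Rightarrow> real \<Rightarrow> real" where
  "Ppert lam a k x y = lam k * x + (\<Sum>i\<le>4. a k i (4 - i) * x ^ i * y ^ (4 - i))"

definition Qpert :: "(nat \<Rightarrow> real) \<Rightarrow> (nat \<Rightarrow> nat \<Rightarrow> nat \<Rightarrow> real) \<Rightarrow> nat \<Rightarrow> real \<Rightarrow> real \<Rightarrow> real" where
  "Qpert lam b k x y = lam k * y + (\<Sum>i\<le>4. b k i (4 - i) * x ^ i * y ^ (4 - i))"

text \<open>First order term of dr/dtheta in polar coordinates:
  dr/dt = r^4 cos t + eps (x P1 + y Q1)/r, dtheta/dt = 1 + eps (x Q1 - y P1)/r^2, hence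
  F1 = (x P1 + y Q1)/r - r^4 cos theta (x Q1 - y P1)/r^2.\<close>
definition F1 :: "(nat \<Rightarrow> real) \<Rightarrow> (nat \<Rightarrow> nat \<Rightarrow> nat \<Rightarrow> real) \<Rightarrow> (nat \<Rightarrow> nat \<Rightarrow> nat \<Rightarrow> real)
    \<Rightarrow> real \<Rightarrow> real \<Rightarrow> real" where
  "F1 lam a b \<theta> r =
     (let x = r * cos \<theta>; y = r * sin \<theta>;
          P = Ppert lam a 1 x y; Q = Qpert lam b 1 x y
      in (x * P + y * Q) / r - r ^ 4 * cos \<theta> * (x * Q - y * P) / r ^ 2)"

definition rsol :: "real \<Rightarrow> real \<Rightarrow> real" where
  "rsol \<theta> z = z * (1 - 3 * z ^ 3 * sin \<theta>) powr (-1/3)"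

definition Ysol :: "real \<Rightarrow> real \<Rightarrow> real" where
  "Ysol \<theta> z = (1 - 3 * z ^ 3 * sin \<theta>) powr (-4/3)"

definition f1 :: "(nat \<Rightarrow> real) \<Rightarrow> (nat \<Rightarrow> nat \<Rightarrow> nat \<Rightarrow> real) \<Rightarrow> (nat \<Rightarrow> nat \<Rightarrow> nat \<Rightarrow> real)
    \<Rightarrow> real \<Rightarrow> real" where
  "f1 lam a b z = Ysol (2 * pi) z *
     integral {0..2 * pi} (\<lambda>s. inverse (Ysol s z) * F1 lam a b s (rsol s z))"

end

theory Submission
  imports Defs
begin

definition AA :: "(nat\<Rightarrow>nat\<Rightarrow>nat\<Rightarrow>real) \<Rightarrow> real \<Rightarrow> real \<Rightarrow> real" where
  "AA a c s = (\<Sum>i\<le>4. a 1 i (4-i) * c^i * s^(4-i))"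

lemma sum4: "(\<Sum>i\<le>(4::nat). f i) = f 0 + f 1 + f 2 + f 3 + (f 4::real)"
  by (simp add: numeral_eq_Suc atMost_Suc)

lemma AA_expand: "AA a c s = a 1 0 4 * s^4 + a 1 1 3 * c * s^3 + a 1 2 2 * c^2 * s^2 + a 1 3 1 * c^3 * s + a 1 4 0 * c^4"
  unfolding AA_def sum4 by simp

lemma Ppert_eq: "Ppert lam a 1 (r * c) (r * s) = lam 1 * (r * c) + r^4 * AA a c s"
  unfolding Ppert_def AA_expand sum4 by (simp add: algebra_simps power_mult_distrib numeral_eq_Suc)

lemma Qpert_eq: "Qpert lam b 1 (r * c) (r * s) = lam 1 * (r * s) + r^4 * AA b c s"
  unfolding Qpert_def AA_expand sum4 by (simp add: algebra_simps power_mult_distrib numeral_eq_Suc)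

lemma F1_eq: assumes "r \<noteq> 0"
  shows "F1 lam a b th r = lam 1 * r + r^4 * (cos th * AA a (cos th) (sin th) + sin th * AA b (cos th) (sin th))
     - r^7 * (cos th * (cos th * AA b (cos th) (sin th) - sin th * AA a (cos th) (sin th)))"
proof -
  have cs: "(cos th)^2 + (sin th)^2 = 1" by simp
  show ?thesis
  unfolding F1_def Let_def Ppert_eq Qpert_eq using assms
  apply (simp add: field_simps power2_eq_square power3_eq_cube numeral_eq_Suc)
  using cs by algebra
qed

lemma alg_aux:
  fixes w t z L P Q :: real
  assumes "w > 0" "t > 0" "w^3 = inverse t"
  shows "inverse (w^4) * (L * (z * w) + (z * w)^4 * P - (z * w)^7 * Q) = L * z * t + z^4 * P - z^7 * Q / t"
proof -
  have e4: "w^4 = w * w^3" and e7: "w^7 = w * w^3 * w^3" by (simp_all add: numeral_eq_Suc)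
  have i4: "inverse (w^4) = t / w" using assms by (simp add: e4 field_simps)
  have z4: "(z*w)^4 = z^4 * w / t" using assms by (simp add: power_mult_distrib e4 field_simps)
  have "(z*w)^7 = z^7 * w * w^3 * w^3" by (simp add: power_mult_distrib numeral_eq_Suc)
  hence z7: "(z*w)^7 = z^7 * w / t^2" unfolding assms(3) using assms by (simp add: field_simps power2_eq_square)
  show ?thesis unfolding i4 z4 z7 using assms by (simp add: field_simps power2_eq_square)
qed

lemma integrand_eq:
  assumes z: "z > 0" "3 * z^3 < 1"
  shows "inverse (Ysol th z) * F1 lam a b th (rsol th z) =
    lam 1 * z * (1 - 3 * z^3 * sin th)
    + z^4 * (cos th * AA a (cos th) (sin th) + sin th * AA b (cos th) (sin th))
    - z^7 * (cos th * (cos th * AA b (cos th) (sin th) - sin th * AA a (cos th) (sin th))) / (1 - 3 * z^3 * sin th)"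
proof -
  define t where "t = 1 - 3 * z^3 * sin th"
  have "3 * z^3 * sin th \<le> 3 * z^3 * 1"
    using z by (intro mult_left_mono) auto
  hence t: "t > 0" using z unfolding t_def by linarith
  define w where "w = t powr (-1/3)"
  have w: "w > 0" unfolding w_def using t by simp
  have w3: "w^3 = inverse t" unfolding w_def using t
    by (simp add: powr_power powr_minus power_inverse)
  have Y: "Ysol th z = w^4" unfolding Ysol_def w_def t_def[symmetric] using t
    by (simp add: powr_power)
  have r: "rsol th z = z * w" unfolding rsol_def w_def t_def by simp
  have zw: "z * w \<noteq> 0" using z w by simp
  show ?thesis
    unfolding Y r t_def[symmetric] F1_eq[OF zw]
    using alg_aux[OF w t w3] by simp
qed

lemma int_cos_sin:
  assumes "continuous_on {-1..1} f"
  shows "integral {0..2*pi} (\<lambda>x. cos x * f (sin x)) = 0"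
proof -
  have "((\<lambda>x. cos x *\<^sub>R f (sin x)) has_integral (integral {sin 0..sin (2*pi)} f - integral {sin (2*pi)..sin 0} f)) {0..2*pi}"
    by (rule has_integral_substitution_general[of "{}" 0 "2*pi" sin "-1" 1 f cos])
       (auto intro!: derivative_eq_intros continuous_intros assms)
  thus ?thesis by (simp add: integral_unique)
qed

lemma int_sin_cos:
  assumes "continuous_on {-1..1} f"
  shows "integral {0..2*pi} (\<lambda>x. sin x * f (cos x)) = 0"
proof -
  have "((\<lambda>x. (- sin x) *\<^sub>R f (cos x)) has_integral (integral {cos 0..cos (2*pi)} f - integral {cos (2*pi)..cos 0} f)) {0..2*pi}"
    by (rule has_integral_substitution_general[of "{}" 0 "2*pi" cos "-1" 1 f "\<lambda>x. - sin x"])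
       (auto intro!: derivative_eq_intros continuous_intros assms)
  hence "((\<lambda>x. (- sin x) * f (cos x)) has_integral 0) {0..2*pi}" by simp
  hence "((\<lambda>x. sin x * f (cos x)) has_integral 0) {0..2*pi}"
    using has_integral_neg[of "\<lambda>x. (- sin x) * f (cos x)" 0] by simp
  thus ?thesis by (simp add: integral_unique)
qed

definition P1 :: "(nat\<Rightarrow>nat\<Rightarrow>nat\<Rightarrow>real) \<Rightarrow> (nat\<Rightarrow>nat\<Rightarrow>nat\<Rightarrow>real) \<Rightarrow> real \<Rightarrow> real" where
  "P1 a b s = a 1 0 4 * s^4 + a 1 2 2 * (1 - s^2) * s^2 + a 1 4 0 * (1 - s^2)^2 + b 1 1 3 * s^4 + b 1 3 1 * (1 - s^2) * s^2"
definition P2 :: "(nat\<Rightarrow>nat\<Rightarrow>nat\<Rightarrow>real) \<Rightarrow> (nat\<Rightarrow>nat\<Rightarrow>nat\<Rightarrow>real) \<Rightarrow> real \<Rightarrow> real" where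
  "P2 a b c = a 1 1 3 * c^2 * (1 - c^2) + a 1 3 1 * c^4 + b 1 0 4 * (1 - c^2)^2 + b 1 2 2 * c^2 * (1 - c^2) + b 1 4 0 * c^4"
definition EE :: "(nat\<Rightarrow>nat\<Rightarrow>nat\<Rightarrow>real) \<Rightarrow> (nat\<Rightarrow>nat\<Rightarrow>nat\<Rightarrow>real) \<Rightarrow> real \<Rightarrow> real" where
  "EE a b s = (b 1 0 4 - a 1 1 3) * (1 - s^2) * s^4 + (b 1 2 2 - a 1 3 1) * (1 - s^2)^2 * s^2 + b 1 4 0 * (1 - s^2)^3"
definition OddP :: "(nat\<Rightarrow>nat\<Rightarrow>nat\<Rightarrow>real) \<Rightarrow> (nat\<Rightarrow>nat\<Rightarrow>nat\<Rightarrow>real) \<Rightarrow> real \<Rightarrow> real" where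
  "OddP a b s = (b 1 1 3 - a 1 2 2) * (1 - s^2) * s^3 + (b 1 3 1 - a 1 4 0) * (1 - s^2)^2 * s - a 1 0 4 * s^5"

lemma H5_dec: assumes "c^2 + s^2 = (1::real)"
  shows "c * AA a c s + s * AA b c s = c * P1 a b s + s * P2 a b c"
  using assms unfolding AA_expand P1_def P2_def by algebra

lemma H6_dec: assumes "c^2 + s^2 = (1::real)"
  shows "c * (c * AA b c s - s * AA a c s) = EE a b s + c * OddP a b s"
  using assms unfolding AA_expand EE_def OddP_def by algebra

lemma den_pos: assumes "z > 0" "3 * z^3 < (1::real)" "\<bar>x\<bar> \<le> 1"
  shows "1 - 3 * z^3 * x > 0"
proof -
  have "3 * z^3 * x \<le> 3 * z^3 * \<bar>x\<bar>" using assms by (intro mult_left_mono) auto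
  also have "\<dots> \<le> 3 * z^3 * 1" using assms by (intro mult_left_mono) auto
  finally show ?thesis using assms by linarith
qed

lemma f1_eq:
  assumes z: "z > 0" "3 * z^3 < 1"
  shows "f1 lam a b z = integral {0..2*pi} (\<lambda>th. lam 1 * z * (1 - 3*z^3* sin th)
     + z^4 * (cos th * P1 a b (sin th) + sin th * P2 a b (cos th))
     - z^7 * (EE a b (sin th) + cos th * OddP a b (sin th)) / (1 - 3*z^3* sin th))"
proof -
  have Y: "Ysol (2*pi) z = 1" unfolding Ysol_def by simp
  show ?thesis unfolding f1_def Y mult_1_left
    by (rule integral_cong) (simp add: integrand_eq[OF z] H5_dec H6_dec)
qed

lemma if_dir:
  assumes z: "z > 0" "3 * z^3 < 1"
    and c: "a 1 1 3 = b 1 0 4" "a 1 3 1 = b 1 2 2" "b 1 4 0 = 0" "lam 1 = 0"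
  shows "f1 lam a b z = 0"
proof -
  have E0: "EE a b x = 0" for x unfolding EE_def using c by simp
  define phi where "phi x = z^4 * P1 a b x - z^7 * OddP a b x / (1 - 3*z^3*x)" for x
  define psi where "psi x = z^4 * P2 a b x" for x
  have dn: "\<forall>x\<in>{-1..1}. 1 - 3*z^3*x \<noteq> 0"
    using den_pos[OF z] by (force simp: abs_le_iff)
  have cphi: "continuous_on {-1..1} phi" unfolding phi_def P1_def OddP_def
    using dn by (intro continuous_intros) auto
  have cpsi: "continuous_on {-1..1} psi" unfolding psi_def P2_def
    by (auto intro!: continuous_intros)
  have ci1: "(\<lambda>x. cos x * phi (sin x)) integrable_on {0..2*pi}"
    by (intro integrable_continuous_real continuous_on_mult continuous_intros
        continuous_on_compose2[OF cphi]) auto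
  have ci2: "(\<lambda>x. sin x * psi (cos x)) integrable_on {0..2*pi}"
    by (intro integrable_continuous_real continuous_on_mult continuous_intros
        continuous_on_compose2[OF cpsi]) auto
  have "f1 lam a b z = integral {0..2*pi} (\<lambda>x. cos x * phi (sin x) + sin x * psi (cos x))"
    unfolding f1_eq[OF z] using den_pos[OF z, of "sin _"]
    by (intro integral_cong) (simp add: c c[unfolded One_nat_def] E0 phi_def psi_def algebra_simps diff_divide_distrib)
  also have "\<dots> = 0"
    using integral_add[OF ci1 ci2] int_cos_sin[OF cphi] int_sin_cos[OF cpsi] by simp
  finally show ?thesis .
qed

lemma small_zero:
  fixes c0 K d :: real
  assumes "d > 0" "\<forall>y\<in>{0<..<d}. \<bar>c0\<bar> \<le> y * K"
  shows "c0 = 0"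
proof (rule ccontr)
  assume nz: "c0 \<noteq> 0"
  define y where "y = min (d/2) (\<bar>c0\<bar> / (2 * (\<bar>K\<bar> + 1)))"
  have y0: "y > 0" unfolding y_def using assms nz by auto
  have yd: "y < d" unfolding y_def using assms by auto
  have "y * K \<le> y * \<bar>K\<bar>" using y0 by (intro mult_left_mono) auto
  also have "\<dots> \<le> (\<bar>c0\<bar> / (2 * (\<bar>K\<bar> + 1))) * \<bar>K\<bar>"
    unfolding y_def by (intro mult_right_mono) auto
  also have "\<dots> < \<bar>c0\<bar>" using nz by (simp add: field_simps add_nonneg_pos)
  finally show False using assms(2) y0 yd by force
qed

lemma poly_zero:
  fixes c :: "nat \<Rightarrow> real"
  assumes "d > 0" "\<forall>y\<in>{0<..<d}. \<bar>\<Sum>i<n. c i * y^i\<bar> \<le> C * y^n"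
  shows "\<forall>i<n. c i = 0"
  using assms
proof (induction n arbitrary: c d C)
  case 0
  then show ?case by simp
next
  case (Suc n)
  define K where "K = (\<Sum>i<n. \<bar>c (Suc i)\<bar>) + \<bar>C\<bar>"
  define d' where "d' = min d 1"
  have d': "d' > 0" unfolding d'_def using Suc by auto
  have split: "(\<Sum>i<Suc n. c i * y^i) = c 0 + y * (\<Sum>i<n. c (Suc i) * y^i)" for y
    by (subst sum.lessThan_Suc_shift) (simp add: sum_distrib_left algebra_simps del: sum.lessThan_Suc)
  have "\<bar>c 0\<bar> \<le> y * K" if y: "y \<in> {0<..<d'}" for y
  proof -
    have y1: "0 < y" "y < 1" "y < d" using y unfolding d'_def by auto
    have "\<bar>\<Sum>i<n. c (Suc i) * y^i\<bar> \<le> (\<Sum>i<n. \<bar>c (Suc i) * y^i\<bar>)" by (rule sum_abs)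
    also have "\<dots> \<le> (\<Sum>i<n. \<bar>c (Suc i)\<bar>)"
    proof (rule sum_mono)
      fix i assume "i \<in> {..<n}"
      have "y^i \<le> 1" using y1 by (intro power_le_one) auto
      thus "\<bar>c (Suc i) * y^i\<bar> \<le> \<bar>c (Suc i)\<bar>" using y1
        by (simp add: abs_mult mult_left_le)
    qed
    finally have b1: "\<bar>y * (\<Sum>i<n. c (Suc i) * y^i)\<bar> \<le> y * (\<Sum>i<n. \<bar>c (Suc i)\<bar>)"
      using y1 by (simp add: abs_mult mult_left_mono)
    have "y^n \<le> 1" using y1 by (intro power_le_one) auto
    hence "C * y^(Suc n) \<le> \<bar>C\<bar> * y"
      using y1 by (simp add: abs_mult) (smt (verit) mult_left_le mult_nonneg_nonneg zero_le_power abs_ge_self abs_ge_zero mult_right_mono)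
    moreover have "\<bar>c 0 + y * (\<Sum>i<n. c (Suc i) * y^i)\<bar> \<le> C * y^(Suc n)"
      using Suc.prems(2) y1 split by auto
    ultimately show ?thesis using b1 unfolding K_def by (simp add: algebra_simps)
  qed
  hence c0: "c 0 = 0" using small_zero[OF d', of "c 0" K] by blast
  have "\<forall>i<n. c (Suc i) = 0"
  proof (rule Suc.IH[of d])
    show "0 < d" using Suc by auto
    show "\<forall>y\<in>{0<..<d}. \<bar>\<Sum>i<n. c (Suc i) * y ^ i\<bar> \<le> C * y ^ n"
    proof
      fix y assume y: "y \<in> {0<..<d}"
      have h: "\<bar>\<Sum>i<Suc n. c i * y^i\<bar> \<le> C * y^Suc n" using Suc.prems(2) y by blast
      have "\<bar>y * (\<Sum>i<n. c (Suc i) * y^i)\<bar> \<le> y * (C * y^n)"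
        using h unfolding split[of y] c0 by (simp add: algebra_simps)
      thus "\<bar>\<Sum>i<n. c (Suc i) * y ^ i\<bar> \<le> C * y ^ n"
        using y by (simp add: abs_mult)
    qed
  qed
  thus ?case using c0 by (auto simp: less_Suc_eq_0_disj)
qed

lemma geo: "(q::real) \<noteq> 1 \<Longrightarrow> 1/(1-q) = (\<Sum>j<n. q^j) + q^n/(1-q)"
proof (induction n)
  case 0 then show ?case by simp
next
  case (Suc n)
  have "q^n/(1-q) = q^n + q^Suc n/(1-q)" using Suc.prems by (simp add: field_simps)
  then show ?case using Suc by simp
qed

lemma pw:
  fixes L z k s G V :: real
  assumes "1 - k * s \<noteq> 0"
  shows "L*z*(1-k* s) + z^4*G - z^7*V/(1-k* s) =
     (L*z + (-(L*z*k))* s + z^4*G) - (z^7*(\<Sum>j<7. k^j*(V* s^j)) + z^7*k^7*(V* s^7/(1-k* s)))"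
proof -
  have q: "k * s \<noteq> 1" using assms by auto
  have "V/(1-k* s) = V * (1/(1-k* s))" by simp
  also have "\<dots> = V * ((\<Sum>j<7. (k* s)^j) + (k* s)^7/(1-k* s))" using geo[OF q, of 7] by simp
  also have "\<dots> = (\<Sum>j<7. k^j*(V* s^j)) + k^7*(V* s^7/(1-k* s))"
    by (simp add: sum_distrib_left distrib_left power_mult_distrib algebra_simps)
  finally have e: "V/(1-k* s) = (\<Sum>j<7. k^j*(V* s^j)) + k^7*(V* s^7/(1-k* s))" .
  have "z^7*V/(1-k* s) = z^7 * (V/(1-k* s))" by simp
  then show ?thesis unfolding e by (simp add: algebra_simps)
qed

lemma EE_poly2: "EE a b s = b 1 4 0 + (b 1 2 2 - a 1 3 1 - 3 * b 1 4 0) * s^2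
   + ((b 1 0 4 - a 1 1 3) - 2 * (b 1 2 2 - a 1 3 1) + 3 * b 1 4 0) * (s^2)^2
   + (- (b 1 0 4 - a 1 1 3) + (b 1 2 2 - a 1 3 1) - b 1 4 0) * (s^2)^3"
  unfolding EE_def by algebra

lemma EE_sq: "EE a b s ^ 2 = b 1 4 0 * (EE a b s * s^0) + (b 1 2 2 - a 1 3 1 - 3 * b 1 4 0) * (EE a b s * s^2)
   + ((b 1 0 4 - a 1 1 3) - 2 * (b 1 2 2 - a 1 3 1) + 3 * b 1 4 0) * (EE a b s * s^4)
   + (- (b 1 0 4 - a 1 1 3) + (b 1 2 2 - a 1 3 1) - b 1 4 0) * (EE a b s * s^6)"
proof -
  have "EE a b s ^ 2 = EE a b s * EE a b s" by (simp add: power2_eq_square)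
  also have "\<dots> = EE a b s * (b 1 4 0 + (b 1 2 2 - a 1 3 1 - 3 * b 1 4 0) * s^2
   + ((b 1 0 4 - a 1 1 3) - 2 * (b 1 2 2 - a 1 3 1) + 3 * b 1 4 0) * (s^2)^2
   + (- (b 1 0 4 - a 1 1 3) + (b 1 2 2 - a 1 3 1) - b 1 4 0) * (s^2)^3)"
    by (subst (2) EE_poly2) (rule refl)
  finally show ?thesis by (simp add: algebra_simps flip: power_mult)
qed

lemma only_if:
  assumes H: "\<forall>z\<in>{0<..<3 powr (-1/3)}. f1 lam a b z = 0"
  shows "a 1 1 3 = b 1 0 4 \<and> a 1 3 1 = b 1 2 2 \<and> b 1 4 0 = 0 \<and> lam 1 = 0"
proof -
  define HH where "HH th = EE a b (sin th) + cos th * OddP a b (sin th)" for th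
  define G5 where "G5 th = cos th * P1 a b (sin th) + sin th * P2 a b (cos th)" for th
  define S1 where "S1 = integral {0..2*pi} sin"
  define I5 where "I5 = integral {0..2*pi} G5"
  define m where "m j = integral {0..2*pi} (\<lambda>th. HH th * sin th ^ j)" for j
  define R where "R z = integral {0..2*pi} (\<lambda>th. HH th * sin th ^ 7 / (1 - 3*z^3* sin th))" for z
  define cf where "cf i = (if i = 0 then 2*pi*lam 1 else if i = 1 then I5 - 3*lam 1*S1
      else - (3^(i-2) * m (i-2)))" for i
  have cHH: "continuous_on S HH" for S unfolding HH_def EE_def OddP_def
    by (intro continuous_intros)
  have cG5: "continuous_on S G5" for S unfolding G5_def P1_def P2_def
    by (intro continuous_intros)
  obtain M where M: "\<And>th. th \<in> {0..2*pi} \<Longrightarrow> \<bar>HH th\<bar> \<le> M"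
  proof -
    have "compact (HH ` {0..2*pi})" by (intro compact_continuous_image cHH) auto
    then obtain B where "\<forall>x\<in>HH ` {0..2*pi}. norm x \<le> B"
      using compact_imp_bounded bounded_iff by metis
    then show ?thesis using that[of B] by auto
  qed
  have M0: "M \<ge> 0" using M[of 0] by auto
  have rep: "f1 lam a b z = z * (\<Sum>i<9. cf i * (z^3)^i) - z * (z^3)^9 * 3^7 * R z"
    if z: "z > 0" "z^3 < 1/27" for z
  proof -
    have z': "z > 0" "3 * z^3 < 1" using z by auto
    have dn: "1 - 3*z^3* sin th > 0" for th using den_pos[OF z', of "sin th"] by simp
    define k where "k = 3*z^3"
    have dn': "1 - k * sin th \<noteq> 0" for th using dn[of th] unfolding k_def by simp
    have "f1 lam a b z = integral {0..2*pi} (\<lambda>th.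
       (lam 1*z + (-(lam 1*z*k))* sin th + z^4*G5 th)
       - (z^7*(\<Sum>j<7. k^j*(HH th* sin th^j)) + z^7*k^7*(HH th* sin th^7/(1-k* sin th))))"
      unfolding f1_eq[OF z'] k_def[symmetric] HH_def[symmetric] G5_def[symmetric]
      by (rule integral_cong, rule pw, rule dn')
    also have "\<dots> = (lam 1*z*(2*pi) - lam 1*z*k*S1 + z^4*I5) - (z^7*(\<Sum>j<7. k^j*m j) + z^7*k^7*R z)"
    proof -
      have i1: "(\<lambda>th. lam 1*z + (-(lam 1*z*k))* sin th) integrable_on {0..2*pi}"
        by (intro integrable_continuous_real continuous_intros)
      have i2: "(\<lambda>th. z^4*G5 th) integrable_on {0..2*pi}"
        by (intro integrable_continuous_real continuous_intros cG5)
      have i3: "(\<lambda>th. lam 1*z) integrable_on {0..2*pi}"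
        by (intro integrable_continuous_real continuous_intros)
      have i4: "(\<lambda>th. (-(lam 1*z*k))* sin th) integrable_on {0..2*pi}"
        by (intro integrable_continuous_real continuous_intros)
      have iA: "(\<lambda>th. lam 1*z + (-(lam 1*z*k))* sin th + z^4*G5 th) integrable_on {0..2*pi}"
        by (intro integrable_continuous_real continuous_intros cG5)
      have j1: "(\<lambda>th. z^7*(\<Sum>j<7. k^j*(HH th* sin th^j))) integrable_on {0..2*pi}"
        by (intro integrable_continuous_real continuous_intros cHH)
      have j2: "(\<lambda>th. z^7*k^7*(HH th* sin th^7/(1-k* sin th))) integrable_on {0..2*pi}"
        using dn' by (intro integrable_continuous_real continuous_intros cHH) auto
      have j3: "(\<lambda>th. k^j*(HH th* sin th^j)) integrable_on {0..2*pi}" for j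
        by (intro integrable_continuous_real continuous_intros cHH)
      have iB: "(\<lambda>th. z^7*(\<Sum>j<7. k^j*(HH th* sin th^j)) + z^7*k^7*(HH th* sin th^7/(1-k* sin th))) integrable_on {0..2*pi}"
        using dn' by (intro integrable_continuous_real continuous_intros cHH) auto
      have eA: "integral {0..2*pi} (\<lambda>th. lam 1*z + (-(lam 1*z*k))* sin th + z^4*G5 th) = lam 1*z*(2*pi) - lam 1*z*k*S1 + z^4*I5"
        apply (subst integral_add[OF i1 i2])
        apply (subst integral_add[OF i3 i4])
        apply (simp add: S1_def I5_def)
        done
      have eB: "integral {0..2*pi} (\<lambda>th. z^7*(\<Sum>j<7. k^j*(HH th* sin th^j)) + z^7*k^7*(HH th* sin th^7/(1-k* sin th))) = z^7*(\<Sum>j<7. k^j*m j) + z^7*k^7*R z"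
        apply (subst integral_add[OF j1 j2])
        apply (subst integral_mult_right)+
        apply (subst integral_sum)
        using j3 apply simp_all
        apply (simp add: m_def R_def k_def)
        done
      show ?thesis by (subst integral_diff[OF iA iB]) (simp only: eA eB)
    qed
    also have "\<dots> = z * (\<Sum>i<9. cf i * (z^3)^i) - z * (z^3)^9 * 3^7 * R z"
    proof -
      have s9: "{..<9::nat} = {0,1,2,3,4,5,6,7,8}" and s7: "{..<7::nat} = {0,1,2,3,4,5,6}" by auto
      show ?thesis unfolding s9 s7 cf_def k_def
        apply (simp add: algebra_simps power_mult_distrib flip: power_mult power_add)
        apply algebra
        done
    qed
    finally show ?thesis .
  qed
  have Rb: "\<bar>R z\<bar> \<le> 2*M*(2*pi)" if z: "z > 0" "z^3 < 1/27" for z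
  proof -
    have z': "z > 0" "3 * z^3 < 1" using z by auto
    have dnh: "1 - 3*z^3* sin th \<ge> 1/2" for th
    proof -
      have "3*z^3* sin th \<le> 3*z^3*1" using z by (intro mult_left_mono) auto
      thus ?thesis using z by linarith
    qed
    have dnz: "1 - 3*z^3* sin th \<noteq> 0" for th using dnh[of th] by linarith
    have "norm (R z) \<le> 2*M*(2*pi - 0)"
      unfolding R_def
    proof (rule integral_bound)
      show "continuous_on {0..2*pi} (\<lambda>th. HH th * sin th ^ 7 / (1 - 3 * z ^ 3 * sin th))"
        using dnz by (intro continuous_intros cHH) auto
      fix t assume t: "t \<in> {0..2*pi}"
      have s7: "\<bar>sin t ^ 7\<bar> \<le> 1" by (simp add: power_abs power_le_one)
      have X: "\<bar>HH t * sin t ^ 7\<bar> \<le> M * 1"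
        unfolding abs_mult by (rule mult_mono) (use M[OF t] s7 M0 in auto)
      have D: "1/2 \<le> 1 - 3 * z ^ 3 * sin t" by (rule dnh)
      have "\<bar>HH t * sin t ^ 7\<bar> / (1 - 3 * z ^ 3 * sin t) \<le> M / (1/2)"
        by (rule frac_le) (use X D M0 in auto)
      thus "norm (HH t * sin t ^ 7 / (1 - 3 * z ^ 3 * sin t)) \<le> 2 * M"
        using D by (simp add: abs_divide)
    qed simp
    thus ?thesis by simp
  qed
  have pb: "\<forall>y\<in>{0<..<1/27}. \<bar>\<Sum>i<9. cf i * y^i\<bar> \<le> (3^7 * (2*M*(2*pi))) * y^9"
  proof
    fix y :: real assume y: "y \<in> {0<..<1/27}"
    define z where "z = root 3 y"
    have zp: "z > 0" unfolding z_def using y by (simp add: real_root_gt_zero)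
    have z3: "z^3 = y" unfolding z_def using y by simp
    have p3: "(3 powr (-1/3::real))^3 = 1/3" by (simp add: powr_power powr_minus power_inverse)
    have zlt: "z < 3 powr (-1/3)"
    proof (rule ccontr)
      assume "\<not> z < 3 powr (-1/3)"
      hence "(3 powr (-1/3::real))^3 \<le> z^3" by (intro power_mono) auto
      thus False using p3 z3 y by simp
    qed
    have "f1 lam a b z = 0" using H zp zlt by auto
    hence "z * (\<Sum>i<9. cf i * (z^3)^i) - z * (z^3)^9 * 3^7 * R z = 0"
      using rep[OF zp] z3 y by simp
    hence e: "z * (\<Sum>i<9. cf i * y^i) = z * (y^9 * 3^7 * R z)"
      unfolding z3 by (simp add: mult.assoc)
    hence e': "(\<Sum>i<9. cf i * y^i) = y^9 * 3^7 * R z" using zp by simp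
    have "\<bar>y^9 * 3^7 * R z\<bar> = y^9 * 3^7 * \<bar>R z\<bar>" using y by (simp add: abs_mult)
    also have "\<dots> \<le> y^9 * 3^7 * (2*M*(2*pi))"
      using Rb[OF zp] z3 y by (intro mult_left_mono) auto
    finally show "\<bar>\<Sum>i<9. cf i * y^i\<bar> \<le> (3^7 * (2*M*(2*pi))) * y^9"
      unfolding e' by (simp add: algebra_simps)
  qed
  have cf0: "\<forall>i<9. cf i = 0" by (rule poly_zero[OF _ pb]) simp
  have lam0: "lam 1 = 0" using cf0[rule_format, of 0] unfolding cf_def by simp
  have m0: "m j = 0" if "j < 7" for j
    using cf0[rule_format, of "j+2"] that unfolding cf_def by simp
  have mom: "integral {0..2*pi} (\<lambda>th. EE a b (sin th) * sin th ^ j) = 0" if "j < 7" for j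
  proof -
    have c1: "(\<lambda>th. EE a b (sin th) * sin th ^ j) integrable_on {0..2*pi}"
      unfolding EE_def by (intro integrable_continuous_real continuous_intros)
    have c2: "(\<lambda>th. cos th * (OddP a b (sin th) * sin th ^ j)) integrable_on {0..2*pi}"
      unfolding OddP_def by (intro integrable_continuous_real continuous_intros)
    have co: "continuous_on {-1..1} (\<lambda>x. OddP a b x * x ^ j)"
      unfolding OddP_def by (intro continuous_intros)
    have "m j = integral {0..2*pi} (\<lambda>th. EE a b (sin th) * sin th ^ j + cos th * (OddP a b (sin th) * sin th ^ j))"
      unfolding m_def HH_def by (simp add: algebra_simps)
    also have "\<dots> = integral {0..2*pi} (\<lambda>th. EE a b (sin th) * sin th ^ j)"
      using integral_add[OF c1 c2] int_cos_sin[OF co] by simp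
    finally show ?thesis using m0[OF that] by simp
  qed
  have ci: "(\<lambda>th. EE a b (sin th) * sin th ^ j) integrable_on {0..2*pi}" for j
    unfolding EE_def by (intro integrable_continuous_real continuous_intros)
  have sq0: "integral {0..2*pi} (\<lambda>th. (EE a b (sin th))^2) = 0"
  proof -
    have k: "(\<lambda>th. c * (EE a b (sin th) * sin th ^ j)) integrable_on {0..2*pi}" for c j
      using integrable_on_cmult_left[OF ci, of c j] by simp
    show ?thesis
      unfolding EE_sq
      apply (subst integral_add[OF integrable_add[OF integrable_add[OF k k] k] k])
      apply (subst integral_add[OF integrable_add[OF k k] k])
      apply (subst integral_add[OF k k])
      apply (simp only: integral_mult_right mom)
      done
  qed
  have cE: "continuous_on {0..2*pi} (\<lambda>th. (EE a b (sin th))^2)"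
    unfolding EE_def by (intro continuous_intros)
  have iff: "integral {0..2*pi} (\<lambda>th. (EE a b (sin th))^2) = 0 \<longleftrightarrow> (\<forall>x\<in>{0..2*pi}. (EE a b (sin x))^2 = 0)"
    by (rule integral_eq_0_iff[OF cE]) auto
  have "\<forall>x\<in>{0..2*pi}. (EE a b (sin x))^2 = 0" using iff sq0 by blast
  hence E0: "EE a b (sin x) = 0" if "x \<in> {0..2*pi}" for x using that by simp
  have w0: "b 1 4 0 = 0" using E0[of 0] unfolding EE_def by simp
  have q1: "EE a b (1/2) = 0" using E0[of "pi/6"] by (simp add: sin_30)
  have s45: "(sin (pi/4))^2 = 1/2" by (simp add: sin_45 power_divide)
  have q2: "EE a b (sin (pi/4)) = 0" using E0[of "pi/4"] by simp
  define u where "u = b 1 0 4 - a 1 1 3"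
  define v where "v = b 1 2 2 - a 1 3 1"
  have e1: "(3/64) * u + (9/64) * v = 0"
    using q1 w0 unfolding EE_poly2[of a b "1/2"] u_def[symmetric] v_def[symmetric]
    by (simp add: power2_eq_square power3_eq_cube field_simps)
  have e2: "(1/8) * u + (1/8) * v = 0"
    using q2 w0 unfolding EE_poly2[of a b "sin (pi/4)"] s45 u_def[symmetric] v_def[symmetric]
    by (simp add: power2_eq_square power3_eq_cube field_simps)
  have "u = 0" "v = 0" using e1 e2 by linarith+
  thus ?thesis using w0 lam0 unfolding u_def v_def by simp
qed

theorem mainTheorem8:
  fixes lam :: "nat \<Rightarrow> real" and a b :: "nat \<Rightarrow> nat \<Rightarrow> nat \<Rightarrow> real"
  shows "(\<forall>z \<in> {0<..<3 powr (-1/3)}. f1 lam a b z = 0) \<longleftrightarrow>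
    (a 1 1 3 = b 1 0 4 \<and> a 1 3 1 = b 1 2 2 \<and> b 1 4 0 = 0 \<and> lam 1 = 0)"
proof
  assume "\<forall>z \<in> {0<..<3 powr (-1/3)}. f1 lam a b z = 0"
  thus "a 1 1 3 = b 1 0 4 \<and> a 1 3 1 = b 1 2 2 \<and> b 1 4 0 = 0 \<and> lam 1 = 0" by (rule only_if)
next
  assume c: "a 1 1 3 = b 1 0 4 \<and> a 1 3 1 = b 1 2 2 \<and> b 1 4 0 = 0 \<and> lam 1 = 0"
  show "\<forall>z \<in> {0<..<3 powr (-1/3)}. f1 lam a b z = 0"
  proof
    fix z assume z: "z \<in> {0<..<3 powr (-1/3::real)}"
    have p3: "(3 powr (-1/3::real))^3 = 1/3" by (simp add: powr_power powr_minus power_inverse)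
    have "z^3 < (3 powr (-1/3::real))^3" using z by (intro power_strict_mono) auto
    hence "3 * z^3 < 1" using p3 by simp
    thus "f1 lam a b z = 0" using if_dir[of z a b lam] z c by auto
  qed
qed

end
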